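(* Let $k\in\mathbb N$, $a=\pi/k$, $\alpha,\beta\in\{0,1\}$, $q\in L_2(0,\pi)$, and let $W_{\alpha,\beta}=\frac{(-1)^{\alpha\beta}}{2}Q^{-1}A_{\alpha,\beta}Rq$ (notation in the context). Then in the degenerate case: (i) if $\alpha=\beta=0$: $\displaystyle\sum_{j=0}^{[(k-1)/2]}W_{0,0}(2ja+t)+\sum_{j=1}^{[k/2]}W_{0,0}(2ja-t)=0$ a.e. on $(0,a)$; (ii) if $\alpha=1,\beta=0$ and $k$ is odd: $\displaystyle\sum_{j=0}^{(k-1)/2}(-1)^jW_{1,0}(2ja+t)=\sum_{j=1}^{(k-1)/2}(-1)^jW_{1,0}(2ja-t)$ a.e. on $(0,a)$; (iii) if $\alpha=\beta=1$ and $k$ is even: $\displaystyle\sum_{j=0}^{k/2-1}(-1)^jW_{1,1}(2ja+t)+\sum_{j=1}^{k/2}(-1)^jW_{1,1}(2ja-t)=0$ a.e. on $(0,a)$. Here $[x]$ denotes the integer part of $x$.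
   Context: For $f\in L_2(0,\pi)$, $t\in(0,a)$, $m=1,\dots,k$: $R_mf(t)=f(t+(k-m)a)$ for odd $m$ and $R_mf(t)=f((k-m+1)a-t)$ for even $m$; $Q_mf(t)=f(t+(m-1)a)$ for odd $m$ and $Q_mf(t)=f(ma-t)$ for even $m$. The (invertible) operators $R,Q:L_2(0,\pi)\to(L_2(0,a))^k$ are $Rf=(R_1f,\dots,R_kf)^T$, $Qf=(Q_1f,\dots,Q_kf)^T$. Let $b=(-1)^{\alpha+\beta}$, $c=(-1)^{1+\beta}$. For $k>1$, $A_{\alpha,\beta}$ is the $k\times k$ tridiagonal matrix whose $(1,1)$ entry is $1$, whose $(k,k)$ entry is $c$, whose other diagonal entries are $0$, whose superdiagonal entries are all $b$ and whose subdiagonal entries are all $c$; for $k=1$, $A_{\alpha,\beta}=2(-1)^{\alpha(\beta+1)}\delta_{1,\beta}$. (For $k>1$ this $W_{\alpha,\beta}$ equals $\frac{(-1)^{\alpha\beta}}2\,(q((k-1)a+t)+bq((k-1)a-t))$ on $(0,a)$, $\frac{(-1)^{\alpha\beta}}2(cq((k+1)a-t)+bq((k-1)a-t))$ on $(a,(k-1)a)$, and $\frac{(-1)^{\alpha\beta}}2c(q((k+1)a-t)+q(t-(k-1)a))$ on $((k-1)a,ka)$.) The degenerate case means one of: (i) $\alpha=\beta=0$; (ii) $\alpha=1,\beta=0$, $k$ odd; (iii) $\alpha=\beta=1$, $k$ even. $W_{\alpha,\beta}$ is the function appearing in the representation of the characteristic function of the problem $-y''+q(x)y(a)=\lambda y$,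 $y^{(\alpha)}(0)=y^{(\beta)}(\pi)=0$. *)

theory Defs
  imports "HOL-Analysis.Analysis"
begin

definition step :: "nat \<Rightarrow> real" where
  "step k = pi / real k"

text \<open>Component operators R_m (1-based index m), acting on f, evaluated at t in (0,a).\<close>
definition Rop :: "nat \<Rightarrow> (real \<Rightarrow> complex) \<Rightarrow> nat \<Rightarrow> real \<Rightarrow> complex" where
  "Rop k f m t = (if odd m then f (t + real (k - m) * step k)
                  else f (real (k - m + 1) * step k - t))"

definition Qop :: "nat \<Rightarrow> (real \<Rightarrow> complex) \<Rightarrow> nat \<Rightarrow> real \<Rightarrow> complex" where
  "Qop k f m t = (if odd m then f (t + real (m - 1) * step k)
                  else f (real m * step k - t))"

text \<open>At the (measure zero) grid points it is set to 0.\<close>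
definition Qinv :: "nat \<Rightarrow> (nat \<Rightarrow> real \<Rightarrow> complex) \<Rightarrow> real \<Rightarrow> complex" where
  "Qinv k g x = (\<Sum>m=1..k. if real (m - 1) * step k < x \<and> x < real m * step k
       then (if odd m then g m (x - real (m - 1) * step k) else g m (real m * step k - x))
       else 0)"

definition Amat :: "nat \<Rightarrow> nat \<Rightarrow> nat \<Rightarrow> nat \<Rightarrow> nat \<Rightarrow> real" where
  "Amat \<alpha> \<beta> k m n =
    (if k = 1 then (if \<beta> = 1 then 2 * (-1) ^ (\<alpha> * (\<beta> + 1)) else 0)
     else if m = n then (if m = 1 then 1 else if m = k then (-1) ^ (1 + \<beta>) else 0)
     else if n = m + 1 then (-1) ^ (\<alpha> + \<beta>)
     else if m = n + 1 then (-1) ^ (1 + \<beta>)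
     else 0)"

definition W :: "nat \<Rightarrow> nat \<Rightarrow> nat \<Rightarrow> (real \<Rightarrow> complex) \<Rightarrow> real \<Rightarrow> complex" where
  "W \<alpha> \<beta> k q x = complex_of_real ((-1) ^ (\<alpha> * \<beta>) / 2) *
     Qinv k (\<lambda>m t. \<Sum>n=1..k. complex_of_real (Amat \<alpha> \<beta> k m n) * Rop k q n t) x"

end

theory Submission
  imports Defs
begin


lemma step_pos: "k \<ge> 1 \<Longrightarrow> step k > 0"
  by (simp add: step_def)

lemma Qinv_at:
  assumes "1 \<le> mm" "mm \<le> k" "real (mm-1) * step k < x" "x < real mm * step k"
  shows "Qinv k g x = (if odd mm then g mm (x - real (mm-1) * step k) else g mm (real mm * step k - x))"
proof -
  have a: "step k > 0" using assms by (simp add: step_def)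
  define y where "y = x / step k"
  have y1: "real (mm-1) < y" "y < real mm" using assms a by (simp_all add: y_def field_simps)
  have cond: "(real (m-1) * step k < x \<and> x < real m * step k) \<longleftrightarrow> m = mm" if "m \<in> {1..k}" for m
  proof
    assume h: "real (m-1) * step k < x \<and> x < real m * step k"
    hence "real (m-1) < y" "y < real m" using a by (simp_all add: y_def field_simps)
    hence "real (m-1) < real mm" "real (mm-1) < real m" using y1 by linarith+
    hence "m - 1 < mm" "mm - 1 < m" by (simp_all only: of_nat_less_iff)
    thus "m = mm" using that assms by auto
  qed (use assms in auto)
  have "Qinv k g x = (\<Sum>m=1..k. if m = mm then (if odd mm then g mm (x - real (mm-1) * step k) else g mm (real mm * step k - x)) else 0)"
    unfolding Qinv_def
    apply (rule sum.cong[OF refl])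
    subgoal for m using cond[of m] by simp
    done
  also have "\<dots> = (if odd mm then g mm (x - real (mm-1) * step k) else g mm (real mm * step k - x))"
    using assms by (simp add: sum.delta)
  finally show ?thesis .
qed

definition G :: "nat \<Rightarrow> nat \<Rightarrow> nat \<Rightarrow> (real \<Rightarrow> complex) \<Rightarrow> nat \<Rightarrow> real \<Rightarrow> complex" where
  "G al be k q m t = (\<Sum>n=1..k. complex_of_real (Amat al be k m n) * Rop k q n t)"

lemma W_plus:
  assumes "2*j+1 \<le> k" "0 < t" "t < step k"
  shows "W al be k q (2 * real j * step k + t) = complex_of_real ((-1) ^ (al * be) / 2) * G al be k q (2*j+1) t"
proof -
  have "Qinv k (\<lambda>m t. \<Sum>n=1..k. complex_of_real (Amat al be k m n) * Rop k q n t) (2 * real j * step k + t)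
     = G al be k q (2*j+1) t"
    by (subst Qinv_at[where mm="2*j+1"]) (use assms in \<open>auto simp: G_def algebra_simps\<close>)
  thus ?thesis unfolding W_def by simp
qed

lemma W_minus:
  assumes "2*j \<le> k" "1 \<le> j" "0 < t" "t < step k"
  shows "W al be k q (2 * real j * step k - t) = complex_of_real ((-1) ^ (al * be) / 2) * G al be k q (2*j) t"
proof -
  have "Qinv k (\<lambda>m t. \<Sum>n=1..k. complex_of_real (Amat al be k m n) * Rop k q n t) (2 * real j * step k - t)
     = G al be k q (2*j) t"
    by (subst Qinv_at[where mm="2*j"]) (use assms in \<open>auto simp: G_def algebra_simps of_nat_diff\<close>)
  thus ?thesis unfolding W_def by simp
qed

lemma split_sum:
  fixes F :: "nat \<Rightarrow> 'b::comm_monoid_add"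
  assumes "k \<ge> 1"
  shows "(\<Sum>j=0..(k-1) div 2. F (2*j+1)) + (\<Sum>j=1..k div 2. F (2*j)) = (\<Sum>m=1..k. F m)"
  using assms
proof (induction k rule: nat_induct_at_least)
  case base then show ?case by simp
next
  case (Suc k)
  show ?case
  proof (cases "even k")
    case True
    then obtain i where i: "k = 2*i" by blast
    have "(\<Sum>j=0..(Suc k-1) div 2. F (2*j+1)) = (\<Sum>j=0..(k-1) div 2. F (2*j+1)) + F (Suc k)"
      using i Suc.hyps by (cases i) (auto)
    moreover have "Suc k div 2 = k div 2" using i by simp
    ultimately show ?thesis using Suc.IH by (simp add: add.commute add.left_commute)
  next
    case False
    then obtain i where i: "k = 2*i+1" using oddE by blast
    have "(Suc k-1) div 2 = (k-1) div 2" using i by simp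
    moreover have "(\<Sum>j=1..Suc k div 2. F (2*j)) = (\<Sum>j=1..k div 2. F (2*j)) + F (Suc k)"
      using i by simp
    ultimately show ?thesis using Suc.IH by (simp add: add.assoc[symmetric])
  qed
qed

lemma Amat_split:
  assumes "k > 1" "m \<ge> 1"
  shows "Amat al be k m n = (if m = n then (if m = 1 then 1 else if m = k then (-1) ^ (1 + be) else 0) else 0)
     + (if 2 \<le> n then (if m = n - 1 then (-1) ^ (al + be) else 0) else 0)
     + (if m = n + 1 then (-1) ^ (1 + be) else 0)"
  using assms by (auto simp: Amat_def)

lemma colsum:
  fixes w :: "nat \<Rightarrow> real"
  assumes "k > 1" "n \<in> {1..k}"
  shows "(\<Sum>m=1..k. w m * Amat al be k m n) =
     w n * (if n = 1 then 1 else if n = k then (-1) ^ (1 + be) else 0)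
     + (if 2 \<le> n then w (n - 1) * (-1) ^ (al + be) else 0)
     + (if n < k then w (n + 1) * (-1) ^ (1 + be) else 0)"
proof -
  have "(\<Sum>m=1..k. w m * Amat al be k m n) =
     (\<Sum>m=1..k. (if m = n then w n * (if n = 1 then 1 else if n = k then (-1) ^ (1 + be) else 0) else 0)
     + (if m = n - 1 then (if 2 \<le> n then w (n - 1) * (-1) ^ (al + be) else 0) else 0)
     + (if m = n + 1 then w (n + 1) * (-1) ^ (1 + be) else 0))"
    by (rule sum.cong[OF refl]) (auto simp: Amat_split[OF assms(1)] algebra_simps)
  moreover have "2 \<le> n \<Longrightarrow> n - 1 \<in> {1..k}" "n < k \<Longrightarrow> n + 1 \<in> {1..k}" "\<not> n < k \<Longrightarrow> n + 1 \<notin> {1..k}"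
    using assms by auto
  ultimately show ?thesis
    using assms by (simp add: sum.distrib)
qed

lemma G_zero:
  fixes w :: "nat \<Rightarrow> real"
  assumes "\<And>n. n \<in> {1..k} \<Longrightarrow> (\<Sum>m=1..k. w m * Amat al be k m n) = 0"
  shows "(\<Sum>m=1..k. complex_of_real (w m) * G al be k q m t) = 0"
proof -
  have "(\<Sum>m=1..k. complex_of_real (w m) * G al be k q m t)
      = (\<Sum>n=1..k. complex_of_real (\<Sum>m=1..k. w m * Amat al be k m n) * Rop k q n t)"
    unfolding G_def apply (simp add: sum_distrib_left sum_distrib_right mult.assoc)
    by (rule sum.swap)
  also have "\<dots> = 0" using assms by simp
  finally show ?thesis .
qed

lemma col_i:
  assumes "k \<ge> 1" "n \<in> {1..k}"
  shows "(\<Sum>m=1..k. 1 * Amat 0 0 k m n) = 0"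
proof (cases "k = 1")
  case True then show ?thesis by (simp add: Amat_def)
next
  case False
  then show ?thesis using colsum[of k n "\<lambda>_. 1" 0 0] assms by auto
qed

lemma col_ii:
  assumes "odd k" "n \<in> {1..k}"
  shows "(\<Sum>m=1..k. (-1) ^ ((m - 1) div 2) * Amat 1 0 k m n) = 0"
proof (cases "k = 1")
  case True then show ?thesis by (simp add: Amat_def)
next
  case False
  hence k: "k > 1" using assms by (cases k) auto
  show ?thesis
  proof (cases "n = 1")
    case True then show ?thesis using colsum[OF k assms(2), of "\<lambda>m. (-1) ^ ((m - 1) div 2)" 1 0] k by simp
  next
    case False
    then obtain p where p: "n = p + 2" using assms(2) by (metis add.commute atLeastAtMost_iff le_add_diff_inverse less_one linorder_neqE_nat nat_1_add_1 not_le plus_nat.simps(2) Suc_leI less_Suc_eq_le add_2_eq_Suc)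
    show ?thesis
    proof (cases "n = k")
      case True
      then obtain i where i: "p = 2*i+1" using assms p by (metis even_add oddE even_numeral)
      have kk: "k = 2*i+3" using True p i by simp
      show ?thesis using colsum[OF k assms(2), of "\<lambda>m. (-1) ^ ((m - 1) div 2)" 1 0] True
        unfolding kk by simp
    next
      case nk: False
      show ?thesis using colsum[OF k assms(2), of "\<lambda>m. (-1) ^ ((m - 1) div 2)" 1 0] nk p k assms by (simp add: div2_Suc_Suc)
    qed
  qed
qed

lemma col_iii:
  assumes "even k" "k \<ge> 1" "n \<in> {1..k}"
  shows "(\<Sum>m=1..k. (-1) ^ (m div 2) * Amat 1 1 k m n) = 0"
proof -
  have "k \<noteq> 1" using assms(1) by auto
  hence k: "k > 1" using assms(2) by linarith
  show ?thesis
  proof (cases "n = 1")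
    case True then show ?thesis using colsum[OF k assms(3), of "\<lambda>m. (-1) ^ (m div 2)" 1 1] k by simp
  next
    case False
    define p where "p = n - 2"
    have p: "n = p + 2" using False assms(3) unfolding p_def by auto
    show ?thesis
    proof (cases "n = k")
      case True
      have "even (p + 2)" using True p assms(1) by simp
      hence "even p" by simp
      then obtain i where i: "p = 2*i" by blast
      have kk: "k = 2*i+2" using True p i by simp
      show ?thesis using colsum[OF k assms(3), of "\<lambda>m. (-1) ^ (m div 2)" 1 1] True
        unfolding kk by simp
    next
      case nk: False
      show ?thesis using colsum[OF k assms(3), of "\<lambda>m. (-1) ^ (m div 2)" 1 1] nk p k assms by (simp add: div2_Suc_Suc)
    qed
  qed
qed

lemma pt_gen:
  fixes w :: "nat \<Rightarrow> real"
  assumes "k \<ge> 1" "0 < t" "t < step k" and S: "(\<Sum>m=1..k. complex_of_real (w m) * G al be k q m t) = 0"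
  shows "(\<Sum>j=0..(k-1) div 2. complex_of_real (w (2*j+1)) * W al be k q (2 * real j * step k + t))
     + (\<Sum>j=1..k div 2. complex_of_real (w (2*j)) * W al be k q (2 * real j * step k - t))
     = 0"
proof -
  let ?C = "complex_of_real ((-1) ^ (al * be) / 2)"
  have 1: "(\<Sum>j=0..(k-1) div 2. complex_of_real (w (2*j+1)) * W al be k q (2 * real j * step k + t))
     = ?C * (\<Sum>j=0..(k-1) div 2. complex_of_real (w (2*j+1)) * G al be k q (2*j+1) t)"
    unfolding sum_distrib_left
    apply (rule sum.cong[OF refl])
    subgoal for j
    proof -
      assume "j \<in> {0..(k-1) div 2}"
      hence "j \<le> (k-1) div 2" by simp
      hence "2*j+1 \<le> k" using assms(1) by presburger
      thus ?thesis using W_plus[of j k t al be q] assms by simp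
    qed
    done
  have 2: "(\<Sum>j=1..k div 2. complex_of_real (w (2*j)) * W al be k q (2 * real j * step k - t))
     = ?C * (\<Sum>j=1..k div 2. complex_of_real (w (2*j)) * G al be k q (2*j) t)"
    unfolding sum_distrib_left
    apply (rule sum.cong[OF refl])
    subgoal for j
    proof -
      assume "j \<in> {1..k div 2}"
      hence j: "j \<le> k div 2" "1 \<le> j" by simp_all
      hence "2*j \<le> k" by presburger
      note this j
      thus ?thesis using W_minus[of j k t al be q] assms by simp
    qed
    done
  show ?thesis unfolding 1 2 distrib_left[symmetric]
    using split_sum[OF assms(1), of "\<lambda>m. complex_of_real (w m) * G al be k q m t"] S by simp
qed

lemma pt_i:
  assumes "k \<ge> 1" "0 < t" "t < step k"
  shows "(\<Sum>j=0..(k - 1) div 2. W 0 0 k q (2 * real j * step k + t))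
          + (\<Sum>j=1..k div 2. W 0 0 k q (2 * real j * step k - t)) = 0"
  using pt_gen[OF assms, of "\<lambda>_. 1" 0 0 q, OF G_zero[of k "\<lambda>_. 1" 0 0 q t, OF col_i[OF assms(1)]]] by simp

lemma pt_ii:
  assumes "odd k" "0 < t" "t < step k"
  shows "(\<Sum>j=0..(k - 1) div 2. (-1) ^ j * W 1 0 k q (2 * real j * step k + t))
          = (\<Sum>j=1..(k - 1) div 2. (-1) ^ j * W 1 0 k q (2 * real j * step k - t))"
proof -
  have k: "k \<ge> 1" using odd_pos[OF assms(1)] by simp
  have kd: "(k - 1) div 2 = k div 2" using assms(1) by (auto elim!: oddE)
  have g: "(\<Sum>j=0..(k-1) div 2. complex_of_real ((-1) ^ ((2*j+1 - 1) div 2)) * W 1 0 k q (2 * real j * step k + t))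
     + (\<Sum>j=1..k div 2. complex_of_real ((-1) ^ ((2*j - 1) div 2)) * W 1 0 k q (2 * real j * step k - t)) = 0"
    by (rule pt_gen[OF k assms(2,3), of "\<lambda>m. (-1) ^ ((m - 1) div 2)" 1 0 q,
      OF G_zero[of k "\<lambda>m. (-1) ^ ((m - 1) div 2)" 1 0 q t, OF col_ii[OF assms(1)]]])
  have e1: "(\<Sum>j=0..(k-1) div 2. complex_of_real ((-1) ^ ((2*j+1 - 1) div 2)) * W 1 0 k q (2 * real j * step k + t))
     = (\<Sum>j=0..(k-1) div 2. (-1) ^ j * W 1 0 k q (2 * real j * step k + t))"
    by (rule sum.cong[OF refl]) simp
  have e2: "(\<Sum>j=1..k div 2. complex_of_real ((-1) ^ ((2*j - 1) div 2)) * W 1 0 k q (2 * real j * step k - t))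
     = - (\<Sum>j=1..k div 2. (-1) ^ j * W 1 0 k q (2 * real j * step k - t))"
    unfolding sum_negf[symmetric]
    apply (rule sum.cong[OF refl])
    subgoal for j by (cases j) auto
    done
  show ?thesis using g unfolding e1 e2 kd by (simp add: eq_neg_iff_add_eq_0 algebra_simps)
qed

lemma pt_iii:
  assumes "even k" "k \<ge> 1" "0 < t" "t < step k"
  shows "(\<Sum>j=0..k div 2 - 1. (-1) ^ j * W 1 1 k q (2 * real j * step k + t))
          + (\<Sum>j=1..k div 2. (-1) ^ j * W 1 1 k q (2 * real j * step k - t)) = 0"
proof -
  have kd: "k div 2 - 1 = (k - 1) div 2" using assms(1) by (auto elim!: evenE)
  have g: "(\<Sum>j=0..(k-1) div 2. complex_of_real ((-1) ^ ((2*j+1) div 2)) * W 1 1 k q (2 * real j * step k + t))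
     + (\<Sum>j=1..k div 2. complex_of_real ((-1) ^ ((2*j) div 2)) * W 1 1 k q (2 * real j * step k - t)) = 0"
    by (rule pt_gen[OF assms(2,3,4), of "\<lambda>m. (-1) ^ (m div 2)" 1 1 q,
      OF G_zero[of k "\<lambda>m. (-1) ^ (m div 2)" 1 1 q t, OF col_iii[OF assms(1,2)]]])
  have e1: "(\<Sum>j=0..(k-1) div 2. complex_of_real ((-1) ^ ((2*j+1) div 2)) * W 1 1 k q (2 * real j * step k + t))
     = (\<Sum>j=0..(k-1) div 2. (-1) ^ j * W 1 1 k q (2 * real j * step k + t))"
    by (rule sum.cong[OF refl]) simp
  have e2: "(\<Sum>j=1..k div 2. complex_of_real ((-1) ^ ((2*j) div 2)) * W 1 1 k q (2 * real j * step k - t))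
     = (\<Sum>j=1..k div 2. (-1) ^ j * W 1 1 k q (2 * real j * step k - t))"
    by (rule sum.cong[OF refl]) simp
  show ?thesis using g unfolding e1 e2 kd .
qed

theorem lemma3p1:
  fixes k :: nat and q :: "real \<Rightarrow> complex"
  assumes "k \<ge> 1"
    and "q \<in> borel_measurable (restrict_space lebesgue {0<..<pi})"
    and "integrable (restrict_space lebesgue {0<..<pi}) (\<lambda>x. (norm (q x))^2)"
  shows "(AE t in lebesgue. t \<in> {0<..<step k} \<longrightarrow>
            (\<Sum>j=0..(k - 1) div 2. W 0 0 k q (2 * real j * step k + t))
          + (\<Sum>j=1..k div 2. W 0 0 k q (2 * real j * step k - t)) = 0)
       \<and> (odd k \<longrightarrow> (AE t in lebesgue. t \<in> {0<..<step k} \<longrightarrow>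
            (\<Sum>j=0..(k - 1) div 2. (-1) ^ j * W 1 0 k q (2 * real j * step k + t))
          = (\<Sum>j=1..(k - 1) div 2. (-1) ^ j * W 1 0 k q (2 * real j * step k - t))))
       \<and> (even k \<longrightarrow> (AE t in lebesgue. t \<in> {0<..<step k} \<longrightarrow>
            (\<Sum>j=0..k div 2 - 1. (-1) ^ j * W 1 1 k q (2 * real j * step k + t))
          + (\<Sum>j=1..k div 2. (-1) ^ j * W 1 1 k q (2 * real j * step k - t)) = 0))"
  proof (intro conjI impI)
  show "AE t in lebesgue. t \<in> {0<..<step k} \<longrightarrow>
            (\<Sum>j=0..(k - 1) div 2. W 0 0 k q (2 * real j * step k + t))
          + (\<Sum>j=1..k div 2. W 0 0 k q (2 * real j * step k - t)) = 0"
    by (rule AE_I2) (use pt_i assms(1) in auto)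
next
  assume "odd k"
  then show "AE t in lebesgue. t \<in> {0<..<step k} \<longrightarrow>
            (\<Sum>j=0..(k - 1) div 2. (-1) ^ j * W 1 0 k q (2 * real j * step k + t))
          = (\<Sum>j=1..(k - 1) div 2. (-1) ^ j * W 1 0 k q (2 * real j * step k - t))"
    by (intro AE_I2 impI) (use pt_ii in auto)
next
  assume "even k"
  then show "AE t in lebesgue. t \<in> {0<..<step k} \<longrightarrow>
            (\<Sum>j=0..k div 2 - 1. (-1) ^ j * W 1 1 k q (2 * real j * step k + t))
          + (\<Sum>j=1..k div 2. (-1) ^ j * W 1 1 k q (2 * real j * step k - t)) = 0"
    by (intro AE_I2 impI) (use pt_iii assms(1) in auto)
qed

end
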